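(* Consider a network of $n$ parallel roads (indexed by $i\in[n]$) shared by $m$ vehicle types (indexed by $j\in[m]$), where vehicle type $j$ has total demand $\bar f^j\ge 0$. A routing is a vector $f=(f^j_i)_{i\in[n],j\in[m]}$; it is feasible if $f^j_i\ge 0$ for all $i,j$ and $\sum_{i\in[n]} f^j_i=\bar f^j$ for all $j$. The latency of road $i$ is $\ell_i(f)=b_i+\sum_{j\in[m]} a^j_i f^j_i$ with constants $a^j_i\ge 0$, $b_i\ge 0$, and the social cost is $J(f)=\sum_{i\in[n]}\big(\sum_{j\in[m]} f^j_i\big)\ell_i(f)$. Let $\mathcal F^*$ be the set of feasible routings minimizing $J$. For a routing $f$, let $G(f)$ be the bipartite graph whose node set consists of the $n$ roads and the $m$ vehicle types, with an edge between road $i$ and vehicle type $j$ if and only if $f^j_i>0$. Then there exists $f\in\mathcal F^*$ such that $G(f)$ is acyclic.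
   Context: Parallel-road network with multiple vehicle types: flow $f^j_i$ of type $j$ on road $i$; each road's latency is affine in the flows of all vehicle types, with type-dependent coefficients $a^j_i$. The social cost is the total latency experienced by all flow. *)

theory Defs
  imports Main "HOL.Real"
begin

text \<open>Roads are indexed by i < n, vehicle types by j < m.
  A routing is f :: nat => nat => real, with f i j the flow of type j on road i.\<close>

definition feasible :: "nat \<Rightarrow> nat \<Rightarrow> (nat \<Rightarrow> real) \<Rightarrow> (nat \<Rightarrow> nat \<Rightarrow> real) \<Rightarrow> bool" where
  "feasible n m fbar f \<longleftrightarrow>
     (\<forall>i<n. \<forall>j<m. f i j \<ge> 0) \<and> (\<forall>j<m. (\<Sum>i<n. f i j) = fbar j)"

definition latency :: "nat \<Rightarrow> (nat \<Rightarrow> nat \<Rightarrow> real) \<Rightarrow> (nat \<Rightarrow> real) \<Rightarrow> (nat \<Rightarrow> nat \<Rightarrow> real) \<Rightarrow> nat \<Rightarrow> real" where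
  "latency m a b f i = b i + (\<Sum>j<m. a i j * f i j)"

definition social_cost :: "nat \<Rightarrow> nat \<Rightarrow> (nat \<Rightarrow> nat \<Rightarrow> real) \<Rightarrow> (nat \<Rightarrow> real) \<Rightarrow> (nat \<Rightarrow> nat \<Rightarrow> real) \<Rightarrow> real" where
  "social_cost n m a b f = (\<Sum>i<n. (\<Sum>j<m. f i j) * latency m a b f i)"

definition G_adj :: "nat \<Rightarrow> nat \<Rightarrow> (nat \<Rightarrow> nat \<Rightarrow> real) \<Rightarrow> nat + nat \<Rightarrow> nat + nat \<Rightarrow> bool" where
  "G_adj n m f u v = (case (u, v) of
      (Inl i, Inr j) \<Rightarrow> i < n \<and> j < m \<and> f i j > 0
    | (Inr j, Inl i) \<Rightarrow> i < n \<and> j < m \<and> f i j > 0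
    | _ \<Rightarrow> False)"

definition G_acyclic :: "nat \<Rightarrow> nat \<Rightarrow> (nat \<Rightarrow> nat \<Rightarrow> real) \<Rightarrow> bool" where
  "G_acyclic n m f \<longleftrightarrow>
     \<not> (\<exists>cs. length cs \<ge> 3 \<and> distinct cs \<and>
            (\<forall>k<length cs. G_adj n m f (cs ! k) (cs ! ((k + 1) mod length cs))))"

end

theory Submission
  imports Defs "HOL-Analysis.Analysis"
begin

lemma coord_cont: "continuous_on UNIV (\<lambda>f::nat\<Rightarrow>nat\<Rightarrow>real. f i j)"
  using continuous_on_product_then_coordinatewise[OF continuous_on_product_coordinates[of i], of j] .

lemma compact_box:
  fixes S :: "nat \<Rightarrow> nat \<Rightarrow> real set"
  assumes "\<And>i j. compact (S i j)"
  shows "compact (PiE UNIV (\<lambda>i. PiE UNIV (\<lambda>j. S i j)))"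
proof -
  have "\<And>i. compact (PiE UNIV (\<lambda>j. S i j))"
    using assms compactin_PiE[of "\<lambda>_. euclidean" UNIV "S i" for i]
    by (simp add: euclidean_product_topology)
  then show ?thesis
    using compactin_PiE[of "\<lambda>_. euclidean" UNIV "\<lambda>i. PiE UNIV (\<lambda>j. S i j)"]
    by (simp add: euclidean_product_topology)
qed

lemma sc_cont: "continuous_on UNIV (\<lambda>f. social_cost n m a b f)"
  unfolding social_cost_def latency_def
  by (intro continuous_intros coord_cont)

lemma exists_min:
  assumes n: "n \<ge> 1" and fb: "\<forall>j<m. fbar j \<ge> 0"
  shows "\<exists>f. feasible n m fbar f \<and> (\<forall>g. feasible n m fbar g \<longrightarrow> social_cost n m a b f \<le> social_cost n m a b g)"
proof -
  define S where "S = (\<lambda>i j. if i < n \<and> j < m then {0..fbar j} else {0::real})"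
  define C where "C = PiE UNIV (\<lambda>i. PiE UNIV (\<lambda>j. S i j))"
  define D where "D = (\<Inter>j\<in>{..<m}. {f::nat\<Rightarrow>nat\<Rightarrow>real. (\<Sum>i<n. f i j) = fbar j})"
  have cC: "compact C" unfolding C_def by (rule compact_box) (simp add: S_def)
  have cD: "closed D" unfolding D_def
    by (intro closed_INT ballI closed_Collect_eq continuous_intros coord_cont)
  have K: "compact (C \<inter> D)" using cC cD by (rule compact_Int_closed)
  define f0 where "f0 = (\<lambda>(i::nat) j. if i = 0 \<and> j < m then fbar j else (0::real))"
  have "f0 \<in> C" unfolding C_def S_def f0_def using fb n by auto
  moreover have "f0 \<in> D" unfolding D_def f0_def using n
    by (auto simp: sum.delta if_distrib cong: if_cong)
  ultimately have ne: "C \<inter> D \<noteq> {}" by blast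
  obtain f where f: "f \<in> C \<inter> D" and fmin: "\<And>y. y \<in> C \<inter> D \<Longrightarrow> social_cost n m a b f \<le> social_cost n m a b y"
    using continuous_attains_inf[OF K ne continuous_on_subset[OF sc_cont]] by blast
  have feasK: "feasible n m fbar x" if "x \<in> C \<inter> D" for x
    using that unfolding feasible_def C_def D_def S_def by (auto simp: PiE_iff) (metis atLeastAtMost_iff)
  show ?thesis
  proof (intro exI conjI allI impI)
    show "feasible n m fbar f" using feasK f .
    fix g assume g: "feasible n m fbar g"
    define g' where "g' = (\<lambda>i j. if i < n \<and> j < m then g i j else 0)"
    have "g i j \<le> fbar j" if "i < n" "j < m" for i j
    proof -
      have "g i j \<le> (\<Sum>i<n. g i j)"
        by (rule member_le_sum) (use g that in \<open>auto simp: feasible_def\<close>)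
      then show ?thesis using g that by (auto simp: feasible_def)
    qed
    then have "g' \<in> C" unfolding C_def S_def g'_def using g by (auto simp: feasible_def)
    moreover have "g' \<in> D" unfolding D_def g'_def using g by (auto simp: feasible_def)
    ultimately have "social_cost n m a b f \<le> social_cost n m a b g'" using fmin by blast
    also have "social_cost n m a b g' = social_cost n m a b g"
      unfolding social_cost_def latency_def g'_def by (intro sum.cong refl) auto
    finally show "social_cost n m a b f \<le> social_cost n m a b g" .
  qed
qed

lemma cost_shift:
  assumes "\<forall>i<n. (\<Sum>j<m. d i j) = 0"
  shows "social_cost n m a b (\<lambda>i j. f i j + t * d i j) =
         social_cost n m a b f + t * (\<Sum>i<n. (\<Sum>j<m. f i j) * (\<Sum>j<m. a i j * d i j))"
proof -
  have "social_cost n m a b (\<lambda>i j. f i j + t * d i j) =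
        (\<Sum>i<n. (\<Sum>j<m. f i j) * latency m a b f i + t * ((\<Sum>j<m. f i j) * (\<Sum>j<m. a i j * d i j)))"
    unfolding social_cost_def latency_def
  proof (intro sum.cong refl)
    fix i assume i: "i \<in> {..<n}"
    have "(\<Sum>j<m. f i j + t * d i j) = (\<Sum>j<m. f i j)"
      using assms i by (simp add: sum.distrib sum_distrib_left[symmetric])
    moreover have "(\<Sum>j<m. a i j * (f i j + t * d i j)) = (\<Sum>j<m. a i j * f i j) + t * (\<Sum>j<m. a i j * d i j)"
      by (simp add: sum.distrib sum_distrib_left algebra_simps)
    ultimately show "(\<Sum>j<m. f i j + t * d i j) * (b i + (\<Sum>j<m. a i j * (f i j + t * d i j))) =
         (\<Sum>j<m. f i j) * (b i + (\<Sum>j<m. a i j * f i j)) + t * ((\<Sum>j<m. f i j) * (\<Sum>j<m. a i j * d i j))"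
      by (simp add: algebra_simps)
  qed
  also have "\<dots> = social_cost n m a b f + t * (\<Sum>i<n. (\<Sum>j<m. f i j) * (\<Sum>j<m. a i j * d i j))"
    unfolding social_cost_def by (simp add: sum.distrib sum_distrib_left)
  finally show ?thesis .
qed

definition cnt :: "nat \<Rightarrow> nat \<Rightarrow> (nat \<Rightarrow> nat \<Rightarrow> real) \<Rightarrow> nat" where
  "cnt n m f = card {p \<in> {..<n} \<times> {..<m}. f (fst p) (snd p) > 0}"

lemma move:
  assumes f: "feasible n m fbar f"
    and dsum: "\<forall>j<m. (\<Sum>i<n. d i j) = 0"
    and dsupp: "\<forall>i<n. \<forall>j<m. d i j \<noteq> 0 \<longrightarrow> f i j > 0"
    and neg: "\<exists>i<n. \<exists>j<m. d i j < 0"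
  shows "\<exists>t>0. feasible n m fbar (\<lambda>i j. f i j + t * d i j) \<and> cnt n m (\<lambda>i j. f i j + t * d i j) < cnt n m f"
proof -
  define N where "N = {p \<in> {..<n} \<times> {..<m}. d (fst p) (snd p) < 0}"
  define r where "r = (\<lambda>p. f (fst p) (snd p) / (- d (fst p) (snd p)))"
  define t where "t = Min (r ` N)"
  have finN: "finite N" unfolding N_def by (rule finite_subset[of _ "{..<n} \<times> {..<m}"]) auto
  have neN: "N \<noteq> {}" using neg unfolding N_def by auto
  have "t \<in> r ` N" unfolding t_def using Min_in[of "r ` N"] finN neN by blast
  then obtain p0 where p0: "p0 \<in> N" "r p0 = t" by auto
  have tle: "t \<le> r p" if "p \<in> N" for p unfolding t_def using finN that by auto
  have rpos: "r p > 0" if "p \<in> N" for p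
    using that dsupp unfolding N_def r_def by (auto simp: divide_pos_neg)
  have tpos: "t > 0" using p0 rpos by metis
  let ?g = "\<lambda>i j. f i j + t * d i j"
  have fnn: "\<forall>i<n. \<forall>j<m. f i j \<ge> 0" using f by (simp add: feasible_def)
  have gnn: "?g i j \<ge> 0" if "i < n" "j < m" for i j
  proof (cases "d i j < 0")
    case True
    then have "(i,j) \<in> N" using that by (simp add: N_def)
    then have "t \<le> f i j / (- d i j)" using tle r_def by fastforce
    then have "t * (- d i j) \<le> f i j" using True pos_le_divide_eq[of "- d i j" t "f i j"] by simp
    then show ?thesis by simp
  next
    case False
    then show ?thesis using fnn that tpos by simp
  qed
  have feas: "feasible n m fbar ?g"
    unfolding feasible_def
  proof (intro conjI allI impI)
    fix j assume j: "j < m"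
    have "(\<Sum>i<n. ?g i j) = (\<Sum>i<n. f i j) + t * (\<Sum>i<n. d i j)"
      by (simp add: sum.distrib sum_distrib_left)
    then show "(\<Sum>i<n. ?g i j) = fbar j" using dsum f j by (simp add: feasible_def)
  qed (use gnn in auto)
  obtain i0 j0 where ij0: "p0 = (i0, j0)" by (cases p0)
  have i0: "i0 < n" "j0 < m" "d i0 j0 < 0" using p0 ij0 by (auto simp: N_def)
  have "f i0 j0 / (- d i0 j0) = t" using p0 ij0 r_def by simp
  then have g0: "?g i0 j0 = 0" using i0 by (auto simp: field_simps)
  have f0: "f i0 j0 > 0" using dsupp i0 by auto
  have sub: "{p \<in> {..<n} \<times> {..<m}. ?g (fst p) (snd p) > 0} \<subset> {p \<in> {..<n} \<times> {..<m}. f (fst p) (snd p) > 0}"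
  proof
    show "{p \<in> {..<n} \<times> {..<m}. ?g (fst p) (snd p) > 0} \<subseteq> {p \<in> {..<n} \<times> {..<m}. f (fst p) (snd p) > 0}"
    proof clarsimp
      fix i j assume "i < n" "j < m" "0 < f i j + t * d i j"
      then show "0 < f i j" using dsupp fnn by (metis less_eq_real_def mult_zero_right add_0)
    qed
    show "{p \<in> {..<n} \<times> {..<m}. ?g (fst p) (snd p) > 0} \<noteq> {p \<in> {..<n} \<times> {..<m}. f (fst p) (snd p) > 0}"
      using g0 f0 i0 by (metis (no_types, lifting) fst_conv less_irrefl lessThan_iff mem_Collect_eq mem_Sigma_iff snd_conv)
  qed
  have "cnt n m ?g < cnt n m f" unfolding cnt_def
    by (rule psubset_card_mono[OF _ sub]) auto
  then show ?thesis using tpos feas by blast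
qed

definition E :: "nat + nat \<Rightarrow> nat + nat \<Rightarrow> nat \<Rightarrow> nat \<Rightarrow> real" where
  "E u v i j = (if (u = Inl i \<and> v = Inr j) \<or> (u = Inr j \<and> v = Inl i) then 1 else 0)"

lemma sumE_i:
  assumes "G_adj n m f u v"
  shows "(\<Sum>i<n. E u v i j) = (if u = Inr j then 1 else 0) + (if v = Inr j then 1 else 0)"
  using assms unfolding G_adj_def E_def
  by (cases u; cases v) (auto simp: sum.delta' if_distrib cong: if_cong)

lemma sumE_j:
  assumes "G_adj n m f u v"
  shows "(\<Sum>j<m. E u v i j) = (if u = Inl i then 1 else 0) + (if v = Inl i then 1 else 0)"
  using assms unfolding G_adj_def E_def
  by (cases u; cases v) (auto simp: sum.delta' if_distrib cong: if_cong)

lemma adj_isl: "G_adj n m f u v \<Longrightarrow> isl u \<noteq> isl v"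
  unfolding G_adj_def by (cases u; cases v) auto

lemma shift_sum:
  fixes g :: "nat \<Rightarrow> real"
  assumes "even L"
  shows "(\<Sum>k<L. (-1)^k * g ((k+1) mod L)) = - (\<Sum>k<L. (-1)^k * g k)"
proof (cases L)
  case 0 then show ?thesis by simp
next
  case (Suc L')
  have "(\<Sum>k<L. (-1)^k * g ((k+1) mod L)) = (\<Sum>k<L'. (-1)^k * g (Suc k)) + (-1)^L' * g 0"
    using Suc by (simp add: sum.lessThan_Suc)
  moreover have "(\<Sum>k<L. (-1)^k * g k) = g 0 + (\<Sum>k<L'. (-1)^(Suc k) * g (Suc k))"
    using Suc sum.lessThan_Suc_shift[of "\<lambda>k. (-1)^k * g k" L'] by simp
  moreover have "odd L'" using Suc assms by simp
  ultimately show ?thesis by (simp add: sum_negf)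
qed

lemma cycle_even:
  assumes L: "length cs \<ge> 3"
    and adj: "\<forall>k<length cs. G_adj n m f (cs ! k) (cs ! ((k + 1) mod length cs))"
  shows "even (length cs)"
proof -
  let ?L = "length cs"
  have "k < ?L \<Longrightarrow> isl (cs ! k) = (isl (cs ! 0) = even k)" for k
  proof (induction k)
    case 0 then show ?case by simp
  next
    case (Suc k)
    then have "G_adj n m f (cs ! k) (cs ! Suc k)" using adj[rule_format, of k] by simp
    then show ?case using Suc adj_isl by fastforce
  qed
  note P = this
  have L1: "?L - 1 + 1 = ?L" using L by linarith
  have "G_adj n m f (cs ! (?L - 1)) (cs ! 0)"
    using adj[rule_format, of "?L - 1"] L L1 by simp
  then have "isl (cs ! (?L - 1)) \<noteq> isl (cs ! 0)" by (rule adj_isl)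
  moreover have "isl (cs ! (?L - 1)) = (isl (cs ! 0) = even (?L - 1))" using P L by simp
  ultimately have "odd (?L - 1)" by auto
  then show ?thesis using L1 by (metis even_Suc Suc_eq_plus1)
qed

lemma cycle_dir:
  assumes L: "length cs \<ge> 3" and dist: "distinct cs"
    and adj: "\<forall>k<length cs. G_adj n m f (cs ! k) (cs ! ((k + 1) mod length cs))"
  shows "\<exists>d::nat\<Rightarrow>nat\<Rightarrow>real. (\<forall>j<m. (\<Sum>i<n. d i j) = 0) \<and> (\<forall>i<n. (\<Sum>j<m. d i j) = 0)
           \<and> (\<forall>i<n. \<forall>j<m. d i j \<noteq> 0 \<longrightarrow> f i j > 0) \<and> (\<exists>i<n. \<exists>j<m. d i j \<noteq> 0)"
proof -
  let ?L = "length cs"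
  define nx where "nx = (\<lambda>k. (k + 1) mod ?L)"
  define d where "d = (\<lambda>i j. \<Sum>k<?L. (-1)^k * E (cs ! k) (cs ! nx k) i j)"
  have ev: "even ?L" using cycle_even[OF L adj] .
  have adj': "\<And>k. k < ?L \<Longrightarrow> G_adj n m f (cs ! k) (cs ! nx k)" using adj nx_def by simp
  have A: "(\<Sum>i<n. d i j) = 0" for j
  proof -
    define h where "h = (\<lambda>k. if cs ! k = Inr j then 1 else (0::real))"
    have "(\<Sum>i<n. d i j) = (\<Sum>k<?L. (-1)^k * (\<Sum>i<n. E (cs ! k) (cs ! nx k) i j))"
      unfolding d_def by (simp add: sum.swap[of _ "{..<n}"] sum_distrib_left)
    also have "\<dots> = (\<Sum>k<?L. (-1)^k * (h k + h (nx k)))"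
      by (intro sum.cong refl) (simp add: sumE_i[OF adj'] h_def)
    also have "\<dots> = (\<Sum>k<?L. (-1)^k * h k) + (\<Sum>k<?L. (-1)^k * h ((k+1) mod ?L))"
      by (simp add: algebra_simps sum.distrib nx_def)
    also have "\<dots> = 0" using shift_sum[OF ev, of h] by simp
    finally show ?thesis .
  qed
  have B: "(\<Sum>j<m. d i j) = 0" for i
  proof -
    define h where "h = (\<lambda>k. if cs ! k = Inl i then 1 else (0::real))"
    have "(\<Sum>j<m. d i j) = (\<Sum>k<?L. (-1)^k * (\<Sum>j<m. E (cs ! k) (cs ! nx k) i j))"
      unfolding d_def by (simp add: sum.swap[of _ "{..<m}"] sum_distrib_left)
    also have "\<dots> = (\<Sum>k<?L. (-1)^k * (h k + h (nx k)))"
      by (intro sum.cong refl) (simp add: sumE_j[OF adj'] h_def)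
    also have "\<dots> = (\<Sum>k<?L. (-1)^k * h k) + (\<Sum>k<?L. (-1)^k * h ((k+1) mod ?L))"
      by (simp add: algebra_simps sum.distrib nx_def)
    also have "\<dots> = 0" using shift_sum[OF ev, of h] by simp
    finally show ?thesis .
  qed
  have C: "f i j > 0" if "d i j \<noteq> 0" for i j
  proof -
    obtain k where k: "k < ?L" "E (cs ! k) (cs ! nx k) i j \<noteq> 0"
      using \<open>d i j \<noteq> 0\<close> unfolding d_def by (metis (no_types, lifting) lessThan_iff mult_zero_right sum.neutral)
    then show ?thesis using adj'[OF k(1)] unfolding E_def G_adj_def by (auto split: if_splits)
  qed
  have D: "\<exists>i<n. \<exists>j<m. d i j \<noteq> 0"
  proof -
    have L0: "0 < ?L" "1 < ?L" using L by auto
    have a01: "G_adj n m f (cs ! 0) (cs ! 1)" using adj'[OF L0(1)] L0 by (simp add: nx_def)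
    then obtain i0 j0 where ij: "i0 < n" "j0 < m" "(cs ! 0 = Inl i0 \<and> cs ! 1 = Inr j0) \<or> (cs ! 0 = Inr j0 \<and> cs ! 1 = Inl i0)"
      unfolding G_adj_def by (cases "cs ! 0"; cases "cs ! 1") auto
    have Ek: "E (cs ! k) (cs ! nx k) i0 j0 = (if k = 0 then 1 else 0)" if k: "k < ?L" for k
    proof (cases "k = 0")
      case True then show ?thesis using ij L0 by (auto simp: E_def nx_def)
    next
      case False
      have nxk: "nx k < ?L" using L0 by (simp add: nx_def)
      have "\<not> ((cs ! k = cs ! 0 \<and> cs ! nx k = cs ! 1) \<or> (cs ! k = cs ! 1 \<and> cs ! nx k = cs ! 0))"
      proof
        assume "(cs ! k = cs ! 0 \<and> cs ! nx k = cs ! 1) \<or> (cs ! k = cs ! 1 \<and> cs ! nx k = cs ! 0)"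
        then show False
        proof
          assume "cs ! k = cs ! 0 \<and> cs ! nx k = cs ! 1"
          then have "k = 0" using nth_eq_iff_index_eq[OF dist k L0(1)] by simp
          then show False using False by simp
        next
          assume h: "cs ! k = cs ! 1 \<and> cs ! nx k = cs ! 0"
          then have "k = 1" using nth_eq_iff_index_eq[OF dist k L0(2)] by simp
          moreover have "nx k = 0" using h nth_eq_iff_index_eq[OF dist nxk L0(1)] by simp
          ultimately have "Suc (Suc 0) mod ?L = 0" by (simp add: nx_def)
          then show False using L by simp
        qed
      qed
      then show ?thesis using ij False unfolding E_def by auto
    qed
    have "d i0 j0 = (\<Sum>k<?L. (-1)^k * (if k = 0 then 1 else 0))"
      unfolding d_def by (intro sum.cong refl) (simp add: Ek)
    also have "\<dots> = 1" using L0 by (simp add: if_distrib sum.delta cong: if_cong)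
    finally show ?thesis using ij(1,2) by (metis one_neq_zero)
  qed
  show ?thesis by (rule exI[of _ d]) (use A B C D in auto)
qed

lemma sum_zero_signs:
  fixes d :: "nat \<Rightarrow> real"
  assumes "(\<Sum>i<n. d i) = 0" "i0 < n" "d i0 \<noteq> 0"
  shows "\<exists>i<n. d i < 0"
proof (rule ccontr)
  assume "\<not> ?thesis"
  then have "\<forall>i\<in>{..<n}. d i \<ge> 0" by auto
  then have "\<forall>i\<in>{..<n}. d i = 0" using assms(1) sum_nonneg_eq_0_iff[of "{..<n}" d] by auto
  then show False using assms by auto
qed

theorem theorem1:
  fixes n m :: nat
    and fbar :: "nat \<Rightarrow> real"
    and a :: "nat \<Rightarrow> nat \<Rightarrow> real"
    and b :: "nat \<Rightarrow> real"
  assumes "n \<ge> 1"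
    and "\<forall>j<m. fbar j \<ge> 0"
    and "\<forall>i<n. \<forall>j<m. a i j \<ge> 0"
    and "\<forall>i<n. b i \<ge> 0"
  shows "\<exists>f. feasible n m fbar f
             \<and> (\<forall>g. feasible n m fbar g \<longrightarrow> social_cost n m a b f \<le> social_cost n m a b g)
             \<and> G_acyclic n m f"
proof -
  define M where "M = (\<lambda>f. feasible n m fbar f
             \<and> (\<forall>g. feasible n m fbar g \<longrightarrow> social_cost n m a b f \<le> social_cost n m a b g))"
  obtain f0 where f0: "M f0" using exists_min[OF assms(1,2)] M_def by blast
  have "\<forall>f. M f \<and> cnt n m f = k \<longrightarrow> (\<exists>f'. M f' \<and> G_acyclic n m f')" for k
  proof (induction k rule: less_induct)
    case (less k)
    show ?case
    proof (intro allI impI)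
      fix f assume fk: "M f \<and> cnt n m f = k"
      show "\<exists>f'. M f' \<and> G_acyclic n m f'"
      proof (cases "G_acyclic n m f")
        case True then show ?thesis using fk by blast
      next
        case False
        then obtain cs where cs: "length cs \<ge> 3" "distinct cs"
          "\<forall>k<length cs. G_adj n m f (cs ! k) (cs ! ((k + 1) mod length cs))"
          unfolding G_acyclic_def by blast
        obtain d :: "nat\<Rightarrow>nat\<Rightarrow>real" where dA: "\<forall>j<m. (\<Sum>i<n. d i j) = 0" and dB: "\<forall>i<n. (\<Sum>j<m. d i j) = 0"
          and dC: "\<forall>i<n. \<forall>j<m. d i j \<noteq> 0 \<longrightarrow> f i j > 0" and dD: "\<exists>i<n. \<exists>j<m. d i j \<noteq> 0"
          using cycle_dir[OF cs] by blast
        obtain i0 j0 where ij0: "i0 < n" "j0 < m" "d i0 j0 \<noteq> 0" using dD by blast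
        have fM: "feasible n m fbar f" and fmin: "\<And>g. feasible n m fbar g \<Longrightarrow> social_cost n m a b f \<le> social_cost n m a b g"
          using fk M_def by auto
        have neg1: "\<exists>i<n. \<exists>j<m. d i j < 0"
          using sum_zero_signs[of "\<lambda>i. d i j0" n i0] dA ij0 by auto
        have neg2: "\<exists>i<n. \<exists>j<m. - d i j < 0"
          using sum_zero_signs[of "\<lambda>i. - d i j0" n i0] dA ij0 by (auto simp: sum_negf)
        obtain t1 where t1: "t1 > 0" "feasible n m fbar (\<lambda>i j. f i j + t1 * d i j)"
          "cnt n m (\<lambda>i j. f i j + t1 * d i j) < cnt n m f"
          using move[OF fM dA dC neg1] by blast
        obtain t2 where t2: "t2 > 0" "feasible n m fbar (\<lambda>i j. f i j + t2 * (- d i j))"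
          using move[of n m fbar f "\<lambda>i j. - d i j"] fM dA dC neg2 by (auto simp: sum_negf)
        define c where "c = (\<Sum>i<n. (\<Sum>j<m. f i j) * (\<Sum>j<m. a i j * d i j))"
        have J1: "social_cost n m a b (\<lambda>i j. f i j + t1 * d i j) = social_cost n m a b f + t1 * c"
          using cost_shift[OF dB] c_def by simp
        have "social_cost n m a b (\<lambda>i j. f i j + t2 * (- d i j)) =
          social_cost n m a b f + t2 * (\<Sum>i<n. (\<Sum>j<m. f i j) * (\<Sum>j<m. a i j * (- d i j)))"
          by (rule cost_shift) (use dB in \<open>simp add: sum_negf\<close>)
        also have "(\<Sum>i<n. (\<Sum>j<m. f i j) * (\<Sum>j<m. a i j * (- d i j))) = - c"
          unfolding c_def by (simp add: sum_negf)
        finally have J2: "social_cost n m a b (\<lambda>i j. f i j + t2 * (- d i j)) = social_cost n m a b f - t2 * c"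
          by simp
        have "t1 * c \<ge> 0" using fmin[OF t1(2)] J1 by simp
        then have "c \<ge> 0" using t1(1) by (simp add: zero_le_mult_iff)
        moreover have "t2 * c \<le> 0" using fmin[OF t2(2)] J2 by simp
        then have "c \<le> 0" using t2(1) by (simp add: mult_le_0_iff)
        ultimately have c0: "c = 0" by simp
        have "M (\<lambda>i j. f i j + t1 * d i j)"
          unfolding M_def using t1(2) J1 c0 fmin by simp
        then show ?thesis using less t1(3) fk by blast
      qed
    qed
  qed
  then obtain f where "M f" "G_acyclic n m f" using f0 by blast
  then show ?thesis unfolding M_def by blast
qed

end
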